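(* Let $n\ge K\ge 1$ and $L\ge 1$ be integers and $\rho\in(0,1]$. Let $\Pi_r,\Pi_c\in[0,1]^{n\times K}$ be matrices whose rows each have $\ell_1$-norm $1$, and suppose there are index sets $\mathcal{I}_r,\mathcal{I}_c\subseteq[n]$ of size $K$ with $\Pi_r(\mathcal{I}_r,:)=I_{K\times K}$ and $\Pi_c(\mathcal{I}_c,:)=I_{K\times K}$. Let $B_1,\dots,B_L\in[0,1]^{K\times K}$, set $\Omega_l=\rho\,\Pi_r B_l\Pi_c'$ for $l\in[L]$, and define $\tilde S_r=\sum_{l\in[L]}\Omega_l\Omega_l'$ and $\tilde S_c=\sum_{l\in[L]}\Omega_l'\Omega_l$. Suppose that $\mathrm{rank}(\sum_{l\in[L]}B_lB_l')=K$ and $\mathrm{rank}(\sum_{l\in[L]}B_l'B_l)=K$. Then: (i) if $U_r\in\mathbb{R}^{n\times K}$ is a matrix whose columns are eigenvectors of $\tilde S_r$ associated with its $K$ largest eigenvalues in absolute value, with $U_r'U_r=I_{K\times K}$, then $U_r=\Pi_r U_r(\mathcal{I}_r,:)$; (ii) if $U_c\in\mathbb{R}^{n\times K}$ is a matrix whose columns are eigenvectors of $\tilde S_c$ associated with its $K$ largest eigenvalues in absolute value, with $U_c'U_c=I_{K\times K}$, then $U_c=\Pi_c U_c(\mathcal{I}_c,:)$.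
   Context: For a matrix $M$ and index set $S$, $M(S,:)$ denotes the submatrix formed by the rows of $M$ indexed by $S$ (in the order of $S$); $M'$ is the transpose; $[q]=\{1,\dots,q\}$. This is the population setting of the multi-layer mixed membership stochastic co-block model, where $\Pi_r$ and $\Pi_c$ are the row (sending) and column (receiving) membership matrices and $\mathcal{I}_r,\mathcal{I}_c$ index pure nodes. *)

theory Defs
  imports "HOL-Analysis.Analysis"
begin

definition diag_mat :: "real^'n \<Rightarrow> real^'n^'n" where
  "diag_mat d = (\<chi> i j. if i = j then d $ i else 0)"

text \<open>Row submatrix M(S,:) where the ordered index set S is given by an
  injective map from the K row positions into the row indices of M.\<close>
definition row_sel :: "'a^'k^'n \<Rightarrow> ('m \<Rightarrow> 'n) \<Rightarrow> 'a^'k^'m" where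
  "row_sel M s = (\<chi> i. M $ s i)"

text \<open>U (n x K) consists of eigenvectors of the symmetric matrix S associated with
  the K largest eigenvalues of S in absolute value: U is obtained by selecting K
  columns of an orthonormal eigen-decomposition S = V diag(mu) V' such that every
  selected eigenvalue is at least as large in absolute value as every
  non-selected one.\<close>
definition top_abs_eigvecs :: "real^'n^'n \<Rightarrow> real^'k^'n \<Rightarrow> bool" where
  "top_abs_eigvecs S U \<longleftrightarrow>
     (\<exists>V mu (c :: 'k \<Rightarrow> 'n).
        orthogonal_matrix V \<and> S = V ** diag_mat mu ** transpose V \<and> inj c \<and>
        (\<forall>k. column k U = column (c k) V) \<and>
        (\<forall>k j. j \<notin> range c \<longrightarrow> \<bar>mu $ j\<bar> \<le> \<bar>mu $ (c k)\<bar>))"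

end

theory Submission
  imports Defs
begin

lemma sum_mat_vec: "(\<Sum>l\<in>F. (A l :: real^'m^'n)) *v x = (\<Sum>l\<in>F. A l *v x)"
  by (induction F rule: infinite_finite_induct) (auto simp: matrix_vector_mult_add_rdistrib)

lemma mat_vec_sum: "(A :: real^'m^'n) *v (\<Sum>l\<in>F. x l) = (\<Sum>l\<in>F. A *v x l)"
  by (induction F rule: infinite_finite_induct) (auto simp: matrix_vector_right_distrib)

lemma key:
  fixes P :: "real^'k^'n" and I :: "'k \<Rightarrow> 'n" and C :: "nat \<Rightarrow> real^'n^'k" and F :: "nat set"
    and U :: "real^'k^'n"
  assumes fin: "finite F" and PI: "row_sel P I = mat 1"
    and Cinj: "\<And>y. (\<forall>l\<in>F. transpose (C l) *v y = 0) \<Longrightarrow> y = 0"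
    and top: "top_abs_eigvecs (\<Sum>l\<in>F. (P ** C l) ** transpose (P ** C l)) U"
  shows "U = P ** row_sel U I"
proof -
  define S where "S = (\<Sum>l\<in>F. (P ** C l) ** transpose (P ** C l))"
  have SP: "S *v x = P *v (\<Sum>l\<in>F. C l *v (transpose (P ** C l) *v x))" for x
    unfolding S_def sum_mat_vec mat_vec_sum
    by (simp add: matrix_vector_mul_assoc[symmetric] del: transpose_matrix_vector)
  have quad: "x \<bullet> (S *v x) = (\<Sum>l\<in>F. norm (transpose (P ** C l) *v x)^2)" for x
    unfolding S_def sum_mat_vec inner_sum_right
  proof (rule sum.cong[OF refl])
    fix l
    have "x \<bullet> ((P ** C l) ** transpose (P ** C l) *v x)
        = x \<bullet> ((P ** C l) *v (transpose (P ** C l) *v x))"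
      by (simp add: matrix_vector_mul_assoc[symmetric] del: transpose_matrix_vector)
    also have "\<dots> = (x v* (P ** C l)) \<bullet> (transpose (P ** C l) *v x)"
      by (simp add: dot_lmul_matrix)
    also have "\<dots> = norm (transpose (P ** C l) *v x)^2"
      by (simp add: power2_norm_eq_inner)
    finally show "x \<bullet> ((P ** C l) ** transpose (P ** C l) *v x) = norm (transpose (P ** C l) *v x)^2" .
  qed
  have null: "transpose P *v x = 0" if "S *v x = 0" for x
  proof (rule Cinj, intro ballI)
    fix l assume l: "l \<in> F"
    have "(\<Sum>l\<in>F. norm (transpose (P ** C l) *v x)^2) = 0"
      using quad[of x] that by simp
    hence "norm (transpose (P ** C l) *v x)^2 = 0"
      using sum_nonneg_eq_0_iff[OF fin, of "\<lambda>l. norm (transpose (P ** C l) *v x)^2"] l by auto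
    thus "transpose (C l) *v (transpose P *v x) = 0"
      by (simp add: matrix_transpose_mul matrix_vector_mul_assoc del: transpose_matrix_vector)
  qed
  have orth: "x \<bullet> (P *v y) = 0" if "transpose P *v x = 0" for x y
  proof -
    have "x \<bullet> (P *v y) = (x v* P) \<bullet> y" by (simp add: dot_lmul_matrix)
    also have "\<dots> = 0" using that by simp
    finally show ?thesis .
  qed
  obtain V mu c where V: "orthogonal_matrix V" and SV: "S = V ** diag_mat mu ** transpose V"
    and c: "inj c" and Ucol: "\<forall>k. column k U = column (c k) V"
    and mub: "\<forall>k j. j \<notin> range c \<longrightarrow> \<bar>mu $ j\<bar> \<le> \<bar>mu $ (c k)\<bar>"
    using top unfolding top_abs_eigvecs_def S_def by blast
  have VtV: "transpose V ** V = mat 1" and VVt: "V ** transpose V = mat 1"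
    using V by (auto simp: orthogonal_matrix_def)
  have eig: "S *v column j V = mu$j *\<^sub>R column j V" for j
  proof -
    have "S *v column j V = V *v (diag_mat mu *v ((transpose V ** V) *v axis j 1))"
      by (simp add: SV matrix_vector_mult_basis[symmetric] matrix_vector_mul_assoc matrix_mul_assoc)
    also have "diag_mat mu *v ((transpose V ** V) *v axis j 1) = mu$j *\<^sub>R axis j 1"
      by (auto simp add: VtV diag_mat_def vec_eq_iff matrix_vector_mult_def axis_def mat_def
          if_distrib[of "\<lambda>z. z * _"] cong: if_cong)
    finally show ?thesis
      by (simp add: matrix_vector_mult_basis vector_scaleR_matrix_ac[symmetric]
          matrix_vector_mult_scaleR)
  qed
  have expand: "w = (\<Sum>j\<in>UNIV. (column j V \<bullet> w) *\<^sub>R column j V)" for w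
  proof -
    have "w = V *v (transpose V *v w)" by (simp add: matrix_vector_mul_assoc VVt del: transpose_matrix_vector)
    also have "\<dots> = (\<Sum>j\<in>UNIV. (transpose V *v w)$j *s column j V)" by (rule matrix_mult_sum)
    also have "\<dots> = (\<Sum>j\<in>UNIV. (column j V \<bullet> w) *\<^sub>R column j V)"
      by (rule sum.cong[OF refl])
        (simp add: vector_matrix_mult_def column_def inner_vec_def mult.commute scalar_mult_eq_scaleR)
    finally show ?thesis .
  qed
  have nz: "mu $ c k \<noteq> 0" for k
  proof
    assume z: "mu $ c k = 0"
    define T where "T = (\<lambda>k'. column (c k') V) ` (UNIV - {k})"
    have zJ: "transpose P *v column j V = 0" if "j \<notin> range c \<or> j = c k" for j
    proof -
      have "mu $ j = 0"
      proof (cases "j = c k")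
        case False
        hence "\<bar>mu $ j\<bar> \<le> \<bar>mu $ c k\<bar>" using that mub by blast
        thus ?thesis using z by simp
      qed (use z in simp)
      thus ?thesis using null eig by simp
    qed
    have sub: "range (\<lambda>y. P *v y) \<subseteq> span T"
    proof safe
      fix y
      define w where "w = P *v y"
      have "w = (\<Sum>j\<in>UNIV. (column j V \<bullet> w) *\<^sub>R column j V)" by (rule expand)
      also have "\<dots> \<in> span T"
      proof (rule span_sum)
        fix j :: 'n
        show "(column j V \<bullet> w) *\<^sub>R column j V \<in> span T"
        proof (cases "j \<notin> range c \<or> j = c k")
          case True
          then show ?thesis using orth[OF zJ[OF True]] w_def by (simp add: span_zero)
        next
          case False
          then obtain k' where "j = c k'" "k' \<noteq> k" by auto
          hence "column j V \<in> T" unfolding T_def by auto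
          then show ?thesis by (simp add: span_mul span_base)
        qed
      qed
      finally show "P *v y \<in> span T" unfolding w_def .
    qed
    have "inj ((*v) P)"
    proof (rule injI)
      fix x y assume "P *v x = P *v y"
      hence "row_sel P I *v x = row_sel P I *v y"
        by (simp add: row_sel_def vec_eq_iff matrix_vector_mult_def)
      thus "x = y" using PI by simp
    qed
    hence "rank P = CARD('k)" using full_rank_injective by blast
    hence "dim (range (\<lambda>y. P *v y)) = CARD('k)" by (simp add: rank_dim_range)
    moreover have "dim (range (\<lambda>y. P *v y)) \<le> card T"
      using dim_le_card[OF sub] unfolding T_def by simp
    moreover have "card T \<le> card (UNIV - {k})" unfolding T_def by (rule card_image_le) simp
    moreover have "card (UNIV - {k}) = CARD('k) - 1" by (simp add: card_Diff_singleton)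
    moreover have "CARD('k) > 0" by simp
    ultimately show False by linarith
  qed
  show ?thesis unfolding vec_eq_iff
  proof (intro allI)
      fix i k
      define y where "y = (1 / mu $ c k) *\<^sub>R (\<Sum>l\<in>F. C l *v (transpose (P ** C l) *v column (c k) V))"
      have cu: "column k U = P *v y"
      proof -
        have "column k U = (1 / mu $ c k) *\<^sub>R (S *v column (c k) V)"
          using eig[of "c k"] nz[of k] Ucol by simp
        thus ?thesis unfolding SP y_def by (simp add: matrix_vector_mult_scaleR)
      qed
      have ry: "row_sel U I $ k' $ k = y $ k'" for k'
      proof -
        have "row_sel U I $ k' $ k = (P *v y) $ I k'"
          using cu[symmetric] by (simp add: row_sel_def column_def vec_eq_iff)
        also have "\<dots> = (row_sel P I *v y) $ k'"
          by (simp add: row_sel_def matrix_vector_mult_def)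
        also have "\<dots> = y $ k'" using PI by simp
        finally show ?thesis .
      qed
      have "U $ i $ k = (P *v y) $ i"
        using cu by (simp add: column_def vec_eq_iff)
      also have "\<dots> = (P ** row_sel U I) $ i $ k"
        by (simp add: matrix_vector_mult_def matrix_matrix_mult_def ry)
      finally show "U $ i $ k = (P ** row_sel U I) $ i $ k" .
  qed
qed


lemma scaleR_mmul_right: "(A :: real^'m^'n) ** (r *\<^sub>R B) = r *\<^sub>R (A ** (B :: real^'p^'m))"
  by (simp add: vec_eq_iff matrix_matrix_mult_def sum_distrib_left mult.left_commute)

lemma scaleR_mmul_left: "(r *\<^sub>R A :: real^'m^'n) ** B = r *\<^sub>R (A ** (B :: real^'p^'m))"
  by (simp add: vec_eq_iff matrix_matrix_mult_def sum_distrib_left mult.assoc)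

lemma scaleR_mvec: "(r *\<^sub>R A :: real^'m^'n) *v y = r *\<^sub>R (A *v y)"
  by (simp add: vec_eq_iff matrix_vector_mult_def sum_distrib_left mult.assoc)

lemma rowsel_inj:
  fixes P :: "real^'k^'n"
  assumes "row_sel P I = mat 1" "P *v z = 0"
  shows "z = 0"
proof -
  have "row_sel P I *v z = 0" using assms(2)
    by (simp add: row_sel_def vec_eq_iff matrix_vector_mult_def)
  thus ?thesis using assms(1) by simp
qed

lemma full_rank_zero:
  fixes A :: "real^'k^'k"
  assumes "rank A = CARD('k)" "A *v y = 0" shows "y = 0"
proof -
  have "inj ((*v) A)" using assms(1) full_rank_injective by blast
  moreover have "A *v 0 = 0" by simp
  ultimately show ?thesis using assms(2) by (metis injD)
qed

theorem lemma1:
  fixes Pr Pc :: "real^'k^'n"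
    and Ir Ic :: "'k \<Rightarrow> 'n"
    and B :: "nat \<Rightarrow> real^'k^'k"
    and L :: nat and rho :: real
  assumes nK: "CARD('k) \<le> CARD('n)"
    and L: "L \<ge> 1"
    and rho: "0 < rho" "rho \<le> 1"
    and Pr_ent: "\<forall>i j. 0 \<le> Pr $ i $ j \<and> Pr $ i $ j \<le> 1"
    and Pc_ent: "\<forall>i j. 0 \<le> Pc $ i $ j \<and> Pc $ i $ j \<le> 1"
    and Pr_row: "\<forall>i. (\<Sum>j\<in>UNIV. Pr $ i $ j) = 1"
    and Pc_row: "\<forall>i. (\<Sum>j\<in>UNIV. Pc $ i $ j) = 1"
    and Ir: "inj Ir" "row_sel Pr Ir = mat 1"
    and Ic: "inj Ic" "row_sel Pc Ic = mat 1"
    and B_ent: "\<forall>l\<in>{1..L}. \<forall>a b. 0 \<le> B l $ a $ b \<and> B l $ a $ b \<le> 1"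
    and rank_r: "rank (\<Sum>l\<in>{1..L}. B l ** transpose (B l)) = CARD('k)"
    and rank_c: "rank (\<Sum>l\<in>{1..L}. transpose (B l) ** B l) = CARD('k)"
  shows
    "(\<forall>Ur :: real^'k^'n.
        top_abs_eigvecs
          (\<Sum>l\<in>{1..L}. (rho *\<^sub>R (Pr ** B l ** transpose Pc)) **
                          transpose (rho *\<^sub>R (Pr ** B l ** transpose Pc))) Ur
        \<and> transpose Ur ** Ur = mat 1
        \<longrightarrow> Ur = Pr ** row_sel Ur Ir)
     \<and>
     (\<forall>Uc :: real^'k^'n.
        top_abs_eigvecs
          (\<Sum>l\<in>{1..L}. transpose (rho *\<^sub>R (Pr ** B l ** transpose Pc)) **
                          (rho *\<^sub>R (Pr ** B l ** transpose Pc))) Uc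
        \<and> transpose Uc ** Uc = mat 1
        \<longrightarrow> Uc = Pc ** row_sel Uc Ic)"
proof (rule conjI; intro allI impI; elim conjE)
  fix Ur :: "real^'k^'n"
  define C where "C = (\<lambda>l. rho *\<^sub>R (B l ** transpose Pc))"
  have Om: "rho *\<^sub>R (Pr ** B l ** transpose Pc) = Pr ** C l" for l
    by (simp add: C_def scaleR_mmul_right matrix_mul_assoc)
  assume "top_abs_eigvecs
          (\<Sum>l\<in>{1..L}. (rho *\<^sub>R (Pr ** B l ** transpose Pc)) **
                          transpose (rho *\<^sub>R (Pr ** B l ** transpose Pc))) Ur"
  hence top: "top_abs_eigvecs (\<Sum>l\<in>{1..L}. (Pr ** C l) ** transpose (Pr ** C l)) Ur"
    by (simp only: Om)
  show "Ur = Pr ** row_sel Ur Ir"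
  proof (rule key[OF _ Ir(2) _ top])
    fix y assume h: "\<forall>l\<in>{1..L}. transpose (C l) *v y = 0"
    have "transpose (B l) *v y = 0" if l: "l \<in> {1..L}" for l
    proof -
      have "transpose (C l) = rho *\<^sub>R (Pc ** transpose (B l))"
        by (simp add: C_def transpose_scalar matrix_transpose_mul)
      moreover have "transpose (C l) *v y = 0" using h l by blast
      ultimately have "(rho *\<^sub>R (Pc ** transpose (B l))) *v y = 0" by simp
      hence "rho *\<^sub>R (Pc *v (transpose (B l) *v y)) = 0"
        by (simp only: scaleR_mvec matrix_vector_mul_assoc)
      hence "Pc *v (transpose (B l) *v y) = 0" using rho by simp
      thus ?thesis using rowsel_inj[OF Ic(2)] by blast
    qed
    hence "(\<Sum>l\<in>{1..L}. B l ** transpose (B l)) *v y = 0"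
      by (simp add: sum_mat_vec matrix_vector_mul_assoc[symmetric] del: transpose_matrix_vector)
    thus "y = 0" using full_rank_zero[OF rank_r] by blast
  qed simp
next
  fix Uc :: "real^'k^'n"
  define C where "C = (\<lambda>l. rho *\<^sub>R (transpose (B l) ** transpose Pr))"
  have Om: "transpose (rho *\<^sub>R (Pr ** B l ** transpose Pc)) = Pc ** C l" for l
    by (simp add: C_def scaleR_mmul_right matrix_mul_assoc transpose_scalar matrix_transpose_mul)
  have Om2: "rho *\<^sub>R (Pr ** B l ** transpose Pc) = transpose (Pc ** C l)" for l
    using Om[of l] by (metis transpose_transpose)
  assume "top_abs_eigvecs
          (\<Sum>l\<in>{1..L}. transpose (rho *\<^sub>R (Pr ** B l ** transpose Pc)) **
                          (rho *\<^sub>R (Pr ** B l ** transpose Pc))) Uc"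
  hence top: "top_abs_eigvecs (\<Sum>l\<in>{1..L}. (Pc ** C l) ** transpose (Pc ** C l)) Uc"
    by (simp only: Om Om2 transpose_transpose)
  show "Uc = Pc ** row_sel Uc Ic"
  proof (rule key[OF _ Ic(2) _ top])
    fix y assume h: "\<forall>l\<in>{1..L}. transpose (C l) *v y = 0"
    have "B l *v y = 0" if l: "l \<in> {1..L}" for l
    proof -
      have "transpose (C l) = rho *\<^sub>R (Pr ** B l)"
        by (simp add: C_def transpose_scalar matrix_transpose_mul)
      moreover have "transpose (C l) *v y = 0" using h l by blast
      ultimately have "(rho *\<^sub>R (Pr ** B l)) *v y = 0" by simp
      hence "rho *\<^sub>R (Pr *v (B l *v y)) = 0"
        by (simp only: scaleR_mvec matrix_vector_mul_assoc)
      hence "Pr *v (B l *v y) = 0" using rho by simp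
      thus ?thesis using rowsel_inj[OF Ir(2)] by blast
    qed
    hence "(\<Sum>l\<in>{1..L}. transpose (B l) ** B l) *v y = 0"
      by (simp add: sum_mat_vec matrix_vector_mul_assoc[symmetric] del: transpose_matrix_vector)
    thus "y = 0" using full_rank_zero[OF rank_c] by blast
  qed simp
qed

end
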